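(* Let $m,n\ge 3$ and let $v$ be any vertex of $\mathcal{C}^3_{m,n}$. Then, with $\mathcal{C}^3_{m,n}-v$ denoting the strong deletion of $v$, \[ \mathcal{E_S}(\mathcal{C}^3_{m,n})>\mathcal{E_S}(\mathcal{C}^3_{m,n}-v). \]
   Context: For a hypergraph $\mathcal{H}$ and distinct vertices $i,j$, the co-degree $c_{ij}$ is the number of hyperedges containing both $i$ and $j$. The Seidel matrix $\mathcal{S}(\mathcal{H})$ has zero diagonal and $(i,j)$-entry $1-2c_{ij}$ for $i\neq j$; the Seidel energy $\mathcal{E_S}(\mathcal{H})$ is the sum of the absolute values of its eigenvalues. The complete $3$-uniform bipartite hypergraph $\mathcal{C}^3_{m,n}$ has vertex set $V_1\sqcup V_2$, $|V_1|=m$, $|V_2|=n$, and hyperedge set all $3$-subsets meeting both $V_1$ and $V_2$. The strong deletion $\mathcal{H}-v$ of a vertex $v$ is the hypergraph with vertex set $V(\mathcal{H})\setminus\{v\}$ and hyperedge set $\{e\in E(\mathcal{H}): v\notin e\}$. *)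

theory Defs
  imports "Jordan_Normal_Form.Char_Poly"
begin

type_synonym hypergraph = "nat set \<times> nat set set"

definition hverts :: "hypergraph \<Rightarrow> nat set" where "hverts H = fst H"
definition hedges :: "hypergraph \<Rightarrow> nat set set" where "hedges H = snd H"

definition codegree :: "hypergraph \<Rightarrow> nat \<Rightarrow> nat \<Rightarrow> nat" where
  "codegree H i j = card {e \<in> hedges H. i \<in> e \<and> j \<in> e}"

definition seidel_matrix :: "hypergraph \<Rightarrow> real mat" where
  "seidel_matrix H =
     (let vs = sorted_list_of_set (hverts H); N = length vs in
      mat N N (\<lambda>(i,j). if i = j then 0
                        else 1 - 2 * real (codegree H (vs ! i) (vs ! j))))"

text \<open>The Seidel matrix is real symmetric, so all eigenvalues are real.\<close>
definition seidel_energy :: "hypergraph \<Rightarrow> real" where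
  "seidel_energy H =
     (let p = char_poly (seidel_matrix H) in
      (\<Sum>r \<in> {x. poly p x = 0}. \<bar>r\<bar> * real (order r p)))"

text \<open>Complete 3-uniform bipartite hypergraph C^3_{m,n}:
  V1 = {0..<m}, V2 = {m..<m+n}.\<close>
definition complete_bip3 :: "nat \<Rightarrow> nat \<Rightarrow> hypergraph" where
  "complete_bip3 m n =
     ({0..<m+n},
      {e. e \<subseteq> {0..<m+n} \<and> card e = 3 \<and> e \<inter> {0..<m} \<noteq> {} \<and> e \<inter> {m..<m+n} \<noteq> {}})"

definition strong_delete :: "hypergraph \<Rightarrow> nat \<Rightarrow> hypergraph" where
  "strong_delete H v = (hverts H - {v}, {e \<in> hedges H. v \<notin> e})"

end

theory Submission
  imports Defs
begin


lemma prod_lin_nonzero: "prod_list (map (\<lambda>r. [:-r, 1:]) rs) \<noteq> (0::real poly)"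
proof -
  have "\<And>r::real. [:-r, 1:] \<noteq> 0" by simp
  then show ?thesis by (simp only: prod_list_zero_iff) auto
qed

lemma order_prod_lin: "order x (prod_list (map (\<lambda>r. [:-r, 1:]) rs)) = count_list rs (x::real)"
proof (induction rs)
  case Nil then show ?case by (simp add: order_0I)
next
  case (Cons r rs)
  have "order x ([:-r,1:] * prod_list (map (\<lambda>r. [:-r, 1:]) rs)) =
        order x [:-r,1:] + order x (prod_list (map (\<lambda>r. [:-r, 1:]) rs))"
    by (rule order_mult) (use prod_lin_nonzero[of "r#rs"] in simp)
  then show ?case using Cons by (auto simp: order_linear')
qed

lemma roots_prod_lin: "{x. poly (prod_list (map (\<lambda>r. [:-r, 1:]) rs)) x = 0} = set (rs::real list)"
  by (induction rs) auto

lemma sum_list_count_real: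
  assumes "set xs \<subseteq> X" "finite X"
  shows "sum_list (map (f::'a \<Rightarrow> real) xs) = (\<Sum>x\<in>X. real (count_list xs x) * f x)"
  using assms(1)
proof (induction xs)
  case Nil then show ?case by simp
next
  case (Cons a xs)
  have aX: "a \<in> X" using Cons.prems by simp
  have "(\<Sum>x\<in>X. real (count_list (a#xs) x) * f x) =
        (\<Sum>x\<in>X. real (count_list xs x) * f x) + (\<Sum>x\<in>X. (if a = x then f x else 0))"
    by (simp add: sum.distrib[symmetric] algebra_simps, rule sum.cong, auto simp: algebra_simps)
  also have "(\<Sum>x\<in>X. (if a = x then f x else 0)) = f a"
    using aX assms(2) by (simp add: sum.delta)
  finally show ?case using Cons by simp
qed

lemma energy_prod_lin:
  "(\<Sum>r \<in> {x. poly (prod_list (map (\<lambda>r. [:-r, 1:]) rs)) x = 0}. \<bar>r\<bar> * real (order r (prod_list (map (\<lambda>r. [:-r, 1:]) rs))))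
   = sum_list (map abs (rs::real list))"
  unfolding roots_prod_lin order_prod_lin
  by (simp add: sum_list_count_real[of rs "set rs" abs] mult.commute)



definition bent :: "nat \<Rightarrow> real \<Rightarrow> real \<Rightarrow> real \<Rightarrow> nat \<Rightarrow> nat \<Rightarrow> real" where
  "bent p a b c i j = (if i = j then 0 else if i < p \<and> j < p then a else if p \<le> i \<and> p \<le> j then b else c)"

definition pent :: "nat \<Rightarrow> real \<Rightarrow> real \<Rightarrow> real \<Rightarrow> nat \<Rightarrow> nat \<Rightarrow> real" where
  "pent p u v1 v2 i j = (if j = 0 then (if i < p then u else v1)
     else if j = p then (if i < p then u else v2)
     else if j < p then (if i = j then 1 else if i = 0 then -1 else 0)
     else (if i = j then 1 else if i = p then -1 else 0))"

lemma sum_two_delta: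
  assumes "j \<in> K" "z \<in> K" "j \<noteq> z" "finite K"
  shows "(\<Sum>k\<in>K. f k * (if k = j then 1 else if k = z then -1 else 0)) = f j - (f z::real)"
proof -
  have "(\<Sum>k\<in>K. f k * (if k = j then 1 else if k = z then -1 else 0)) =
        (\<Sum>k\<in>K. (if k = j then f k else 0) - (if k = z then f k else 0))"
    by (rule sum.cong) (use assms in auto)
  also have "\<dots> = f j - f z" using assms by (simp add: sum_subtractf sum.delta')
  finally show ?thesis .
qed

lemma sum_all_but:
  assumes "i \<in> K" "finite K"
  shows "(\<Sum>k\<in>K. (if i = k then 0 else a)) = (real (card K) - 1) * (a::real)"
proof -
  have "(\<Sum>k\<in>K. (if i = k then 0 else a)) = (\<Sum>k\<in>K. a - (if i = k then a else 0))"
    by (rule sum.cong) auto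
  also have "\<dots> = real (card K) * a - a" using assms by (simp add: sum_subtractf sum.delta)
  finally show ?thesis by (simp add: algebra_simps)
qed

lemma bent_sum1:
  assumes "i < p + q"
  shows "(\<Sum>k\<in>{0..<p}. bent p a b c i k) = (if i < p then (real p - 1) * a else real p * c)"
proof (cases "i < p")
  case True
  have "(\<Sum>k\<in>{0..<p}. bent p a b c i k) = (\<Sum>k\<in>{0..<p}. (if i = k then 0 else a))"
    by (rule sum.cong) (use True in \<open>auto simp: bent_def\<close>)
  also have "\<dots> = (real p - 1) * a" using True by (subst sum_all_but) auto
  finally show ?thesis using True by simp
next
  case False
  have "(\<Sum>k\<in>{0..<p}. bent p a b c i k) = (\<Sum>k\<in>{0..<p}. c)"
    by (rule sum.cong) (use False in \<open>auto simp: bent_def\<close>)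
  then show ?thesis using False by simp
qed

lemma bent_sum2:
  assumes "i < p + q"
  shows "(\<Sum>k\<in>{p..<p+q}. bent p a b c i k) = (if i < p then real q * c else (real q - 1) * b)"
proof (cases "i < p")
  case True
  have "(\<Sum>k\<in>{p..<p+q}. bent p a b c i k) = (\<Sum>k\<in>{p..<p+q}. c)"
    by (rule sum.cong) (use True in \<open>auto simp: bent_def\<close>)
  then show ?thesis using True by simp
next
  case False
  have "(\<Sum>k\<in>{p..<p+q}. bent p a b c i k) = (\<Sum>k\<in>{p..<p+q}. (if i = k then 0 else b))"
    by (rule sum.cong) (use False in \<open>auto simp: bent_def\<close>)
  also have "\<dots> = (real q - 1) * b" using False assms by (subst sum_all_but) auto
  finally show ?thesis using False by simp
qed

lemma split_range: "{0..<p+q} = {0..<p} \<union> {p..<p+(q::nat)}" by auto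

lemma SP_col0:
  assumes "i < p + q" and A: "A = (real p - 1) * a" and B: "B = (real q - 1) * b"
    and t: "t * t - (A + B) * t + A * B - c * c * real p * real q = 0"
  shows "(\<Sum>k\<in>{0..<p+q}. bent p a b c i k * (if k < p then c * real q else t - A))
         = (if i < p then c * real q else t - A) * t"
proof -
  have "(\<Sum>k\<in>{0..<p+q}. bent p a b c i k * (if k < p then c * real q else t - A))
     = (\<Sum>k\<in>{0..<p}. bent p a b c i k) * (c * real q) + (\<Sum>k\<in>{p..<p+q}. bent p a b c i k) * (t - A)"
    unfolding split_range
    by (subst sum.union_disjoint) (auto simp: sum_distrib_right intro!: sum.cong)
  also have "\<dots> = (if i < p then c * real q else t - A) * t"
    unfolding bent_sum1[OF assms(1)] bent_sum2[OF assms(1)]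
    using t unfolding A B by (auto simp: algebra_simps)
  finally show ?thesis .
qed

definition bmat :: "nat \<Rightarrow> nat \<Rightarrow> real \<Rightarrow> real \<Rightarrow> real \<Rightarrow> real mat" where
  "bmat p q a b c = mat (p+q) (p+q) (\<lambda>(i,j). bent p a b c i j)"
definition pmat :: "nat \<Rightarrow> nat \<Rightarrow> real \<Rightarrow> real \<Rightarrow> real \<Rightarrow> real mat" where
  "pmat p q u v1 v2 = mat (p+q) (p+q) (\<lambda>(i,j). pent p u v1 v2 i j)"
definition dv :: "nat \<Rightarrow> real \<Rightarrow> real \<Rightarrow> real \<Rightarrow> real \<Rightarrow> nat \<Rightarrow> real" where
  "dv p a b t1 t2 j = (if j = 0 then t1 else if j = p then t2 else if j < p then -a else -b)"
definition dmat :: "nat \<Rightarrow> nat \<Rightarrow> real \<Rightarrow> real \<Rightarrow> real \<Rightarrow> real \<Rightarrow> real mat" where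
  "dmat p q a b t1 t2 = mat (p+q) (p+q) (\<lambda>(i,j). if i = j then dv p a b t1 t2 j else 0)"

lemma SP_eq:
  assumes p: "p \<ge> 1" and q: "q \<ge> 1"
    and A: "A = (real p - 1) * a" and B: "B = (real q - 1) * b"
    and t1: "t1 * t1 - (A + B) * t1 + A * B - c * c * real p * real q = 0"
    and t2: "t2 * t2 - (A + B) * t2 + A * B - c * c * real p * real q = 0"
  shows "bmat p q a b c * pmat p q (c * real q) (t1 - A) (t2 - A) = pmat p q (c * real q) (t1 - A) (t2 - A) * dmat p q a b t1 t2"
proof (rule eq_matI)
  fix i j assume i: "i < dim_row (pmat p q (c * real q) (t1 - A) (t2 - A) * dmat p q a b t1 t2)"
    and j: "j < dim_col (pmat p q (c * real q) (t1 - A) (t2 - A) * dmat p q a b t1 t2)"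
  let ?N = "p + q"
  have i: "i < ?N" and j: "j < ?N" using i j by (auto simp: pmat_def dmat_def)
  have L: "(bmat p q a b c * pmat p q (c * real q) (t1 - A) (t2 - A)) $$ (i,j) =
     (\<Sum>k\<in>{0..<?N}. bent p a b c i k * pent p (c * real q) (t1 - A) (t2 - A) k j)"
    using i j by (simp add: bmat_def pmat_def scalar_prod_def)
  have R: "(pmat p q (c * real q) (t1 - A) (t2 - A) * dmat p q a b t1 t2) $$ (i,j) =
     pent p (c * real q) (t1 - A) (t2 - A) i j * dv p a b t1 t2 j"
  proof -
    have "(pmat p q (c * real q) (t1 - A) (t2 - A) * dmat p q a b t1 t2) $$ (i,j) =
       (\<Sum>k\<in>{0..<?N}. pent p (c * real q) (t1 - A) (t2 - A) i k * (if k = j then dv p a b t1 t2 j else 0))"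
      using i j by (simp add: dmat_def pmat_def scalar_prod_def)
    also have "\<dots> = (\<Sum>k\<in>{0..<?N}. (if k = j then pent p (c * real q) (t1 - A) (t2 - A) i j * dv p a b t1 t2 j else 0))"
      by (rule sum.cong) auto
    also have "\<dots> = pent p (c * real q) (t1 - A) (t2 - A) i j * dv p a b t1 t2 j"
      using j by (simp add: sum.delta')
    finally show ?thesis .
  qed
  have "(\<Sum>k\<in>{0..<?N}. bent p a b c i k * pent p (c * real q) (t1 - A) (t2 - A) k j) =
        pent p (c * real q) (t1 - A) (t2 - A) i j * dv p a b t1 t2 j"
  proof -
    consider "j = 0" | "j = p" | "0 < j \<and> j < p" | "p < j" using p by linarith
    then show ?thesis
    proof cases
      case 1
      have "(\<Sum>k\<in>{0..<?N}. bent p a b c i k * pent p (c * real q) (t1 - A) (t2 - A) k j) =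
            (\<Sum>k\<in>{0..<?N}. bent p a b c i k * (if k < p then c * real q else t1 - A))"
        by (rule sum.cong) (use 1 in \<open>auto simp: pent_def\<close>)
      also have "\<dots> = (if i < p then c * real q else t1 - A) * t1"
        by (rule SP_col0[OF i A B t1])
      finally show ?thesis using 1 by (simp add: pent_def dv_def)
    next
      case 2
      have "(\<Sum>k\<in>{0..<?N}. bent p a b c i k * pent p (c * real q) (t1 - A) (t2 - A) k j) =
            (\<Sum>k\<in>{0..<?N}. bent p a b c i k * (if k < p then c * real q else t2 - A))"
        by (rule sum.cong) (use 2 p in \<open>auto simp: pent_def\<close>)
      also have "\<dots> = (if i < p then c * real q else t2 - A) * t2"
        by (rule SP_col0[OF i A B t2])
      finally show ?thesis using 2 p by (simp add: pent_def dv_def)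
    next
      case 3
      have "(\<Sum>k\<in>{0..<?N}. bent p a b c i k * pent p (c * real q) (t1 - A) (t2 - A) k j) =
            (\<Sum>k\<in>{0..<?N}. bent p a b c i k * (if k = j then 1 else if k = 0 then -1 else 0))"
        by (rule sum.cong) (use 3 in \<open>auto simp: pent_def\<close>)
      also have "\<dots> = bent p a b c i j - bent p a b c i 0"
        by (rule sum_two_delta) (use 3 j in auto)
      finally show ?thesis using 3 by (auto simp: pent_def dv_def bent_def)
    next
      case 4
      have "(\<Sum>k\<in>{0..<?N}. bent p a b c i k * pent p (c * real q) (t1 - A) (t2 - A) k j) =
            (\<Sum>k\<in>{0..<?N}. bent p a b c i k * (if k = j then 1 else if k = p then -1 else 0))"
        by (rule sum.cong) (use 4 in \<open>auto simp: pent_def\<close>)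
      also have "\<dots> = bent p a b c i j - bent p a b c i p"
        by (rule sum_two_delta) (use 4 j in auto)
      finally show ?thesis using 4 by (auto simp: pent_def dv_def bent_def)
    qed
  qed
  then show "(bmat p q a b c * pmat p q (c * real q) (t1 - A) (t2 - A)) $$ (i,j) =
     (pmat p q (c * real q) (t1 - A) (t2 - A) * dmat p q a b t1 t2) $$ (i,j)"
    using L R by simp
qed (auto simp: bmat_def pmat_def dmat_def)

lemma rowval:
  assumes p: "p \<ge> 1" and q: "q \<ge> 1" and i: "i < p + q"
  shows "(\<Sum>j\<in>{0..<p+q}. pent p u v1 v2 i j * w j) =
    (if i < p then u * (w 0 + w p) else v1 * w 0 + v2 * w p) +
    (if i = 0 then - (\<Sum>j\<in>{1..<p}. w j) else if i = p then - (\<Sum>j\<in>{Suc p..<p+q}. w j) else w i)"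
proof -
  have dec: "{0..<p+q} = insert 0 (insert p ({1..<p} \<union> {Suc p..<p+q}))" using p q by auto
  have S1: "(\<Sum>j\<in>{1..<p}. pent p u v1 v2 i j * w j) = (if i = 0 then - (\<Sum>j\<in>{1..<p}. w j) else if i < p then w i else 0)"
  proof -
    have "(\<Sum>j\<in>{1..<p}. pent p u v1 v2 i j * w j) = (\<Sum>j\<in>{1..<p}. (if i = j then w j else 0) - (if i = 0 then w j else 0))"
      by (rule sum.cong) (auto simp: pent_def)
    then show ?thesis by (auto simp: sum_subtractf sum.delta)
  qed
  have S2: "(\<Sum>j\<in>{Suc p..<p+q}. pent p u v1 v2 i j * w j) = (if i = p then - (\<Sum>j\<in>{Suc p..<p+q}. w j) else if p < i then w i else 0)"
  proof -
    have "(\<Sum>j\<in>{Suc p..<p+q}. pent p u v1 v2 i j * w j) = (\<Sum>j\<in>{Suc p..<p+q}. (if i = j then w j else 0) - (if i = p then w j else 0))"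
      by (rule sum.cong) (auto simp: pent_def)
    then show ?thesis using i by (auto simp: sum_subtractf sum.delta)
  qed
  have "(\<Sum>j\<in>{0..<p+q}. pent p u v1 v2 i j * w j) =
     pent p u v1 v2 i 0 * w 0 + pent p u v1 v2 i p * w p +
     (\<Sum>j\<in>{1..<p}. pent p u v1 v2 i j * w j) + (\<Sum>j\<in>{Suc p..<p+q}. pent p u v1 v2 i j * w j)"
    unfolding dec using p by (simp add: sum.union_disjoint)
  also have "\<dots> = (if i < p then u * (w 0 + w p) else v1 * w 0 + v2 * w p) +
    (if i = 0 then - (\<Sum>j\<in>{1..<p}. w j) else if i = p then - (\<Sum>j\<in>{Suc p..<p+q}. w j) else w i)"
    unfolding S1 S2 using p i by (auto simp: pent_def algebra_simps)
  finally show ?thesis .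
qed

lemma kernel_zero:
  assumes p: "p \<ge> 1" and q: "q \<ge> 1" and u: "u \<noteq> 0" and v: "v1 \<noteq> v2"
    and z: "\<And>i. i < p + q \<Longrightarrow> (\<Sum>j\<in>{0..<p+q}. pent p u v1 v2 i j * w j) = 0"
  shows "\<And>i. i < p + q \<Longrightarrow> w i = (0::real)"
proof -
  define S1 where "S1 = (\<Sum>j\<in>{1..<p}. w j)"
  define S2 where "S2 = (\<Sum>j\<in>{Suc p..<p+q}. w j)"
  have r: "\<And>i. i < p + q \<Longrightarrow> (if i < p then u * (w 0 + w p) else v1 * w 0 + v2 * w p) +
    (if i = 0 then - S1 else if i = p then - S2 else w i) = 0"
    using z rowval[OF p q] unfolding S1_def S2_def by metis
  have "(\<Sum>i\<in>{0..<p}. u * (w 0 + w p) + (if i = 0 then - S1 else w i)) = 0"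
    by (rule sum.neutral) (use r p in \<open>fastforce\<close>)
  moreover have "(\<Sum>i\<in>{0..<p}. u * (w 0 + w p) + (if i = 0 then - S1 else w i)) = real p * (u * (w 0 + w p))"
  proof -
    have e: "{0..<p} = insert 0 {1..<p}" using p by auto
    have "(\<Sum>i\<in>{1..<p}. u * (w 0 + w p) + (if i = 0 then - S1 else w i)) = (\<Sum>i\<in>{1..<p}. u * (w 0 + w p) + w i)"
      by (rule sum.cong) auto
    also have "\<dots> = (real p - 1) * (u * (w 0 + w p)) + S1" using p by (simp add: sum.distrib S1_def of_nat_diff)
    finally show ?thesis unfolding e by (simp add: algebra_simps)
  qed
  ultimately have s0: "w 0 + w p = 0" using u p by simp
  have w1: "w i = 0" if "0 < i" "i < p" for i using r[of i] that s0 by auto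
  have "(\<Sum>i\<in>{p..<p+q}. (v1 * w 0 + v2 * w p) + (if i = p then - S2 else w i)) = 0"
    by (rule sum.neutral) (use r p in \<open>fastforce\<close>)
  moreover have "(\<Sum>i\<in>{p..<p+q}. (v1 * w 0 + v2 * w p) + (if i = p then - S2 else w i)) = real q * (v1 * w 0 + v2 * w p)"
  proof -
    have e: "{p..<p+q} = insert p {Suc p..<p+q}" using q by auto
    have "(\<Sum>i\<in>{Suc p..<p+q}. (v1 * w 0 + v2 * w p) + (if i = p then - S2 else w i)) = (\<Sum>i\<in>{Suc p..<p+q}. (v1 * w 0 + v2 * w p) + w i)"
      by (rule sum.cong) auto
    also have "\<dots> = (real q - 1) * (v1 * w 0 + v2 * w p) + S2" using q by (simp add: sum.distrib S2_def of_nat_diff)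
    finally show ?thesis unfolding e by (simp add: algebra_simps)
  qed
  ultimately have t0: "v1 * w 0 + v2 * w p = 0" using q by simp
  have w2: "w i = 0" if "p < i" "i < p + q" for i using r[of i] that t0 by auto
  have wpm: "w p = - w 0" using s0 by linarith
  have "(v1 - v2) * w 0 = 0" using t0 unfolding wpm by (simp add: algebra_simps)
  then have w00: "w 0 = 0" using v by simp
  then have wp0: "w p = 0" using s0 by simp
  fix i assume "i < p + q"
  then show "w i = 0" using w1 w2 w00 wp0 by (cases "i = 0"; cases "i = p"; cases "i < p") auto
qed

lemma det_pmat:
  assumes p: "p \<ge> 1" and q: "q \<ge> 1" and u: "u \<noteq> 0" and v: "v1 \<noteq> v2"
  shows "det (pmat p q u v1 v2) \<noteq> 0"
proof
  assume "det (pmat p q u v1 v2) = 0"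
  then obtain x where x: "x \<in> carrier_vec (p+q)" "x \<noteq> 0\<^sub>v (p+q)" "pmat p q u v1 v2 *\<^sub>v x = 0\<^sub>v (p+q)"
    using det_0_iff_vec_prod_zero_field[of "pmat p q u v1 v2" "p+q"] by (auto simp: pmat_def)
  have "\<And>i. i < p + q \<Longrightarrow> (\<Sum>j\<in>{0..<p+q}. pent p u v1 v2 i j * (x $ j)) = 0"
  proof -
    fix i assume i: "i < p + q"
    have "(pmat p q u v1 v2 *\<^sub>v x) $ i = 0" using x(3) i by simp
    then show "(\<Sum>j\<in>{0..<p+q}. pent p u v1 v2 i j * (x $ j)) = 0"
      using i x(1) by (simp add: pmat_def scalar_prod_def)
  qed
  then have "\<And>i. i < p + q \<Longrightarrow> x $ i = 0" using kernel_zero[OF p q u v, of "\<lambda>j. x $ j"] by blast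
  then have "x = 0\<^sub>v (p+q)" using x(1) by (intro eq_vecI) auto
  then show False using x(2) by simp
qed



lemma char_poly_bmat:
  assumes p: "p \<ge> 1" and q: "q \<ge> 1" and c: "c \<noteq> 0"
    and A: "A = (real p - 1) * a" and B: "B = (real q - 1) * b"
    and t1: "t1 * t1 - (A + B) * t1 + A * B - c * c * real p * real q = 0"
    and t2: "t2 * t2 - (A + B) * t2 + A * B - c * c * real p * real q = 0"
    and t12: "t1 \<noteq> t2"
  shows "char_poly (bmat p q a b c) = prod_list (map (\<lambda>r. [:-r, 1:]) (map (dv p a b t1 t2) [0..<p+q]))"
proof -
  let ?N = "p + q"
  let ?P = "pmat p q (c * real q) (t1 - A) (t2 - A)"
  let ?D = "dmat p q a b t1 t2"
  let ?S = "bmat p q a b c"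
  have cP: "?P \<in> carrier_mat ?N ?N" and cD: "?D \<in> carrier_mat ?N ?N" and cS: "?S \<in> carrier_mat ?N ?N"
    by (auto simp: pmat_def dmat_def bmat_def)
  have "det ?P \<noteq> 0" by (rule det_pmat) (use p q c t12 in auto)
  from det_non_zero_imp_unit[OF cP this, of "()"]
  obtain Q where cQ: "Q \<in> carrier_mat ?N ?N" and QP: "Q * ?P = 1\<^sub>m ?N" and PQ: "?P * Q = 1\<^sub>m ?N"
    unfolding Units_def by (auto simp: ring_mat_simps)
  have SP: "?S * ?P = ?P * ?D" by (rule SP_eq[OF p q A B t1 t2])
  have "?S = ?S * (?P * Q)" using cS by (simp add: PQ)
  also have "\<dots> = (?S * ?P) * Q" using cS cP cQ by (simp add: assoc_mult_mat)
  also have "\<dots> = ?P * ?D * Q" unfolding SP ..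
  finally have "similar_mat ?S ?D"
    unfolding similar_mat_def similar_mat_wit_def Let_def using cS cP cD cQ PQ QP
    by (intro exI[of _ ?P] exI[of _ Q]) auto
  then have "char_poly ?S = char_poly ?D" by (rule char_poly_similar)
  also have "\<dots> = (\<Prod> a \<leftarrow> diag_mat ?D. [:- a, 1:])"
    by (rule char_poly_upper_triangular[OF cD]) (auto simp: upper_triangular_def dmat_def)
  also have "diag_mat ?D = map (dv p a b t1 t2) [0..<p+q]"
    by (rule nth_equalityI) (auto simp: diag_mat_def dmat_def)
  finally show ?thesis by (simp add: comp_def)
qed

lemma sum_abs_dv:
  assumes p: "p \<ge> 1" and q: "q \<ge> 1"
  shows "sum_list (map abs (map (dv p a b t1 t2) [0..<p+q])) = \<bar>t1\<bar> + \<bar>t2\<bar> + (real p - 1) * \<bar>a\<bar> + (real q - 1) * \<bar>b\<bar>"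
proof -
  have dec: "{0..<p+q} = insert 0 (insert p ({1..<p} \<union> {Suc p..<p+q}))" using p q by auto
  have "sum_list (map abs (map (dv p a b t1 t2) [0..<p+q])) = (\<Sum>j\<in>{0..<p+q}. \<bar>dv p a b t1 t2 j\<bar>)"
    by (simp add: sum_list_distinct_conv_sum_set comp_def)
  also have "\<dots> = \<bar>dv p a b t1 t2 0\<bar> + \<bar>dv p a b t1 t2 p\<bar> + (\<Sum>j\<in>{1..<p}. \<bar>dv p a b t1 t2 j\<bar>) + (\<Sum>j\<in>{Suc p..<p+q}. \<bar>dv p a b t1 t2 j\<bar>)"
    unfolding dec using p by (simp add: sum.union_disjoint)
  also have "(\<Sum>j\<in>{1..<p}. \<bar>dv p a b t1 t2 j\<bar>) = (\<Sum>j\<in>{1..<p}. \<bar>a\<bar>)"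
    by (rule sum.cong) (auto simp: dv_def)
  also have "(\<Sum>j\<in>{Suc p..<p+q}. \<bar>dv p a b t1 t2 j\<bar>) = (\<Sum>j\<in>{Suc p..<p+q}. \<bar>b\<bar>)"
    by (rule sum.cong) (auto simp: dv_def)
  also have "dv p a b t1 t2 0 = t1" by (simp add: dv_def)
  also have "dv p a b t1 t2 p = t2" using p by (simp add: dv_def)
  finally show ?thesis using p q by (simp add: of_nat_diff)
qed

lemma energy_bmat:
  assumes p: "p \<ge> 1" and q: "q \<ge> 1" and c: "c \<noteq> 0"
    and A: "A = (real p - 1) * a" and B: "B = (real q - 1) * b"
    and neg: "A * B < c * c * real p * real q"
  shows "(let P = char_poly (bmat p q a b c) in (\<Sum>r \<in> {x. poly P x = 0}. \<bar>r\<bar> * real (order r P)))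
     = (real p - 1) * \<bar>a\<bar> + (real q - 1) * \<bar>b\<bar> + sqrt ((A - B)^2 + 4 * (c * c * real p * real q))"
proof -
  define d where "d = (A - B)^2 + 4 * (c * c * real p * real q)"
  define r where "r = sqrt d"
  have "c * c > 0" using c by (auto simp: zero_less_mult_iff)
  moreover have "real p > 0" "real q > 0" using p q by auto
  ultimately have pq: "c * c * real p * real q > 0" by simp
  have dpos: "d > 0" unfolding d_def using pq by (simp add: add_nonneg_pos)
  have rpos: "r > 0" unfolding r_def using dpos by simp
  have rr: "r * r = d" unfolding r_def using dpos by simp
  define t1 where "t1 = (A + B + r) / 2"
  define t2 where "t2 = (A + B - r) / 2"
  have q1: "t1 * t1 - (A + B) * t1 + A * B - c * c * real p * real q = 0"
  proof -
    have "4 * (t1 * t1 - (A + B) * t1 + A * B - c * c * real p * real q) = r * r - d"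
      unfolding t1_def d_def by (simp add: field_simps power2_eq_square)
    then show ?thesis using rr by simp
  qed
  have q2: "t2 * t2 - (A + B) * t2 + A * B - c * c * real p * real q = 0"
  proof -
    have "4 * (t2 * t2 - (A + B) * t2 + A * B - c * c * real p * real q) = r * r - d"
      unfolding t2_def d_def by (simp add: field_simps power2_eq_square)
    then show ?thesis using rr by simp
  qed
  have t12: "t1 \<noteq> t2" using rpos unfolding t1_def t2_def by simp
  have prod: "t1 * t2 = A * B - c * c * real p * real q"
  proof -
    have "4 * (t1 * t2) = (A + B) * (A + B) - r * r" unfolding t1_def t2_def by (simp add: field_simps)
    also have "\<dots> = 4 * (A * B - c * c * real p * real q)" unfolding rr d_def by (simp add: power2_eq_square algebra_simps)
    finally show ?thesis by simp
  qed
  have "t1 * t2 < 0" using prod neg by simp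
  moreover have "t1 > t2" using rpos unfolding t1_def t2_def by simp
  ultimately have t1p: "t1 > 0" and t2n: "t2 < 0"
    by (auto simp: mult_less_0_iff)
  have abs: "\<bar>t1\<bar> + \<bar>t2\<bar> = r" using t1p t2n unfolding t1_def t2_def by (simp add: field_simps)
  have cp: "char_poly (bmat p q a b c) = prod_list (map (\<lambda>r. [:-r, 1:]) (map (dv p a b t1 t2) [0..<p+q]))"
    by (rule char_poly_bmat[OF p q c A B q1 q2 t12])
  show ?thesis
    unfolding Let_def cp energy_prod_lin sum_abs_dv[OF p q] using abs unfolding r_def d_def by simp
qed



lemma card3_split:
  assumes "card e = 3" "x \<in> e" "y \<in> e" "x \<noteq> y"
  shows "\<exists>k. k \<noteq> x \<and> k \<noteq> y \<and> e = {x, y, k}"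
proof -
  have fin: "finite e" using assms(1) by (metis card.infinite zero_neq_numeral)
  have "card (e - {x, y}) = 1" using assms fin by (simp add: card_Diff_subset)
  then obtain k where k: "e - {x, y} = {k}" by (auto simp: card_Suc_eq)
  then have "e = {x, y, k}" using assms by auto
  moreover have "k \<noteq> x \<and> k \<noteq> y" using k by auto
  ultimately show ?thesis by blast
qed

definition KK :: "nat \<Rightarrow> nat \<Rightarrow> nat \<Rightarrow> nat \<Rightarrow> nat \<Rightarrow> nat set" where
  "KK m n x y w = {k. k < m + n \<and> k \<noteq> x \<and> k \<noteq> y \<and> k \<noteq> w \<and> (x < m \<or> y < m \<or> k < m) \<and> (m \<le> x \<or> m \<le> y \<or> m \<le> k)}"

lemma codeg_set:
  assumes xy: "x \<noteq> y" "x < m + n" "y < m + n" "w \<noteq> x" "w \<noteq> y"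
  shows "{e \<in> hedges (complete_bip3 m n). x \<in> e \<and> y \<in> e \<and> w \<notin> e} = (\<lambda>k. {x, y, k}) ` KK m n x y w"
proof (intro equalityI subsetI)
  fix e assume e: "e \<in> {e \<in> hedges (complete_bip3 m n). x \<in> e \<and> y \<in> e \<and> w \<notin> e}"
  then have e1: "e \<subseteq> {0..<m+n}" "card e = 3" "e \<inter> {0..<m} \<noteq> {}" "e \<inter> {m..<m+n} \<noteq> {}" "x \<in> e" "y \<in> e" "w \<notin> e"
    by (auto simp: hedges_def complete_bip3_def)
  obtain k where k: "k \<noteq> x" "k \<noteq> y" "e = {x, y, k}" using card3_split[OF e1(2) e1(5) e1(6) xy(1)] by blast
  have "k \<in> KK m n x y w" using e1 k unfolding KK_def by auto
  then show "e \<in> (\<lambda>k. {x, y, k}) ` KK m n x y w" using k by blast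
next
  fix e assume "e \<in> (\<lambda>k. {x, y, k}) ` KK m n x y w"
  then obtain k where k: "k \<in> KK m n x y w" "e = {x, y, k}" by blast
  have kk: "k < m + n" "k \<noteq> x" "k \<noteq> y" "k \<noteq> w" "x < m \<or> y < m \<or> k < m" "m \<le> x \<or> m \<le> y \<or> m \<le> k"
    using k(1) unfolding KK_def by auto
  have c3: "card {x, y, k} = 3" using kk xy by simp
  have s: "{x, y, k} \<subseteq> {0..<m+n}" using kk xy by auto
  have i1: "{x, y, k} \<inter> {0..<m} \<noteq> {}" using kk(5) by auto
  have i2: "{x, y, k} \<inter> {m..<m+n} \<noteq> {}" using kk(6) kk(1) xy by auto
  show "e \<in> {e \<in> hedges (complete_bip3 m n). x \<in> e \<and> y \<in> e \<and> w \<notin> e}"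
    unfolding k(2) hedges_def complete_bip3_def using c3 s i1 i2 kk(4) xy by simp
qed

lemma codeg_card:
  assumes xy: "x \<noteq> y" "x < m + n" "y < m + n" "w \<noteq> x" "w \<noteq> y"
  shows "card {e \<in> hedges (complete_bip3 m n). x \<in> e \<and> y \<in> e \<and> w \<notin> e} = card (KK m n x y w)"
  unfolding codeg_set[OF xy]
proof (rule card_image)
  show "inj_on (\<lambda>k. {x, y, k}) (KK m n x y w)"
    unfolding inj_on_def KK_def by (auto simp: insert_eq_iff)
qed

lemma KK_11: assumes "x < m" "y < m" shows "card (KK m n x y w) = n - (if m \<le> w \<and> w < m + n then 1 else 0)"
proof -
  have "KK m n x y w = {m..<m+n} - {w}" using assms unfolding KK_def by auto
  then show ?thesis by (simp add: card_Diff_singleton_if)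
qed

lemma KK_22: assumes "m \<le> x" "m \<le> y" shows "card (KK m n x y w) = m - (if w < m then 1 else 0)"
proof -
  have "KK m n x y w = {0..<m} - {w}" using assms unfolding KK_def by auto
  then show ?thesis by (simp add: card_Diff_singleton_if)
qed

lemma KK_12: assumes "x \<noteq> y" "x < m + n" "y < m + n" "w \<noteq> x" "w \<noteq> y" "x < m \<and> m \<le> y \<or> y < m \<and> m \<le> x"
  shows "card (KK m n x y w) = m + n - 2 - (if w < m + n then 1 else 0)"
proof -
  have "KK m n x y w = ({0..<m+n} - {x, y}) - {w}" using assms unfolding KK_def by auto
  moreover have "card ({0..<m+n} - {x, y}) = m + n - 2" using assms by (simp add: card_Diff_subset)
  ultimately show ?thesis using assms by (auto simp: card_Diff_singleton_if numeral_3_eq_3 numeral_2_eq_2)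
qed



lemma codeg_complete:
  assumes "x \<noteq> y" "x < m + n" "y < m + n"
  shows "codegree (complete_bip3 m n) x y = card (KK m n x y (m + n))"
proof -
  have "{e \<in> hedges (complete_bip3 m n). x \<in> e \<and> y \<in> e} = {e \<in> hedges (complete_bip3 m n). x \<in> e \<and> y \<in> e \<and> m + n \<notin> e}"
    by (auto simp: hedges_def complete_bip3_def)
  then show ?thesis unfolding codegree_def using codeg_card[of x y m n "m+n"] assms by simp
qed

lemma SM_complete:
  "seidel_matrix (complete_bip3 m n) = bmat m n (1 - 2 * real n) (1 - 2 * real m) (1 - 2 * real (m + n - 2))"
proof -
  have vs: "sorted_list_of_set (hverts (complete_bip3 m n)) = [0..<m+n]"
    by (simp add: hverts_def complete_bip3_def)
  show ?thesis
  proof (rule eq_matI)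
    fix i j assume "i < dim_row (bmat m n (1 - 2 * real n) (1 - 2 * real m) (1 - 2 * real (m + n - 2)))"
      "j < dim_col (bmat m n (1 - 2 * real n) (1 - 2 * real m) (1 - 2 * real (m + n - 2)))"
    then have i: "i < m + n" and j: "j < m + n" by (auto simp: bmat_def)
    show "seidel_matrix (complete_bip3 m n) $$ (i, j) = bmat m n (1 - 2 * real n) (1 - 2 * real m) (1 - 2 * real (m + n - 2)) $$ (i, j)"
    proof (cases "i = j")
      case True then show ?thesis using i j by (simp add: seidel_matrix_def Let_def vs bmat_def bent_def)
    next
      case False
      have cd: "codegree (complete_bip3 m n) i j = card (KK m n i j (m + n))" by (rule codeg_complete) (use False i j in auto)
      consider "i < m" "j < m" | "m \<le> i" "m \<le> j" | "i < m \<and> m \<le> j \<or> j < m \<and> m \<le> i" by linarith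
      then show ?thesis
      proof cases
        case 1 then show ?thesis using i j False by (simp add: seidel_matrix_def Let_def vs bmat_def bent_def cd KK_11)
      next
        case 2 then show ?thesis using i j False by (simp add: seidel_matrix_def Let_def vs bmat_def bent_def cd KK_22)
      next
        case 3
        have "card (KK m n i j (m + n)) = m + n - 2" using KK_12[of i j m n "m+n"] 3 i j False by simp
        then show ?thesis using 3 i j False by (auto simp: seidel_matrix_def Let_def vs bmat_def bent_def cd)
      qed
    qed
  qed (auto simp: seidel_matrix_def Let_def vs bmat_def)
qed

definition fidx :: "nat \<Rightarrow> nat \<Rightarrow> nat" where "fidx v i = (if i < v then i else Suc i)"

lemma vs_del:
  assumes v: "v < m + n" and i: "i < m + n - 1"
  shows "sorted_list_of_set (hverts (strong_delete (complete_bip3 m n) v)) ! i = fidx v i"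
    and "length (sorted_list_of_set (hverts (strong_delete (complete_bip3 m n) v))) = m + n - 1"
proof -
  have s: "hverts (strong_delete (complete_bip3 m n) v) = set ([0..<v] @ [Suc v..<m+n])"
    using v by (auto simp: hverts_def strong_delete_def complete_bip3_def)
  have l: "sorted_list_of_set (hverts (strong_delete (complete_bip3 m n) v)) = [0..<v] @ [Suc v..<m+n]"
    unfolding s by (rule sorted_list_of_set.idem_if_sorted_distinct) (auto simp: sorted_append)
  show "sorted_list_of_set (hverts (strong_delete (complete_bip3 m n) v)) ! i = fidx v i"
    unfolding l fidx_def using i v by (auto simp: nth_append)
  show "length (sorted_list_of_set (hverts (strong_delete (complete_bip3 m n) v))) = m + n - 1"
    unfolding l using v by simp
qed

lemma card_hv_del: "v < m + n \<Longrightarrow> card (hverts (strong_delete (complete_bip3 m n) v)) = m + n - 1"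
  by (simp add: hverts_def strong_delete_def complete_bip3_def)

lemma codeg_del:
  assumes "x \<noteq> y" "x < m + n" "y < m + n" "v \<noteq> x" "v \<noteq> y"
  shows "codegree (strong_delete (complete_bip3 m n) v) x y = card (KK m n x y v)"
proof -
  have "{e \<in> hedges (strong_delete (complete_bip3 m n) v). x \<in> e \<and> y \<in> e} = {e \<in> hedges (complete_bip3 m n). x \<in> e \<and> y \<in> e \<and> v \<notin> e}"
    by (auto simp: hedges_def strong_delete_def)
  then show ?thesis unfolding codegree_def using codeg_card[of x y m n v] assms by simp
qed

lemma fidx_props:
  assumes "i < m + n - 1" "v < m + n"
  shows "fidx v i < m + n" "fidx v i \<noteq> v"
  using assms by (auto simp: fidx_def)

lemma fidx_inj: "i \<noteq> j \<Longrightarrow> fidx v i \<noteq> fidx v j"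
  by (auto simp: fidx_def)

lemma SM_del1:
  assumes v: "v < m" 
  shows "seidel_matrix (strong_delete (complete_bip3 m n) v) = bmat (m - 1) n (1 - 2 * real n) (1 - 2 * real (m - 1)) (1 - 2 * real (m + n - 3))"
proof -
  have v': "v < m + n" using v by simp
  have N: "m - 1 + n = m + n - 1" using v by simp
  show ?thesis
  proof (rule eq_matI)
    fix i j assume "i < dim_row (bmat (m - 1) n (1 - 2 * real n) (1 - 2 * real (m - 1)) (1 - 2 * real (m + n - 3)))"
      "j < dim_col (bmat (m - 1) n (1 - 2 * real n) (1 - 2 * real (m - 1)) (1 - 2 * real (m + n - 3)))"
    then have i: "i < m + n - 1" and j: "j < m + n - 1" using N by (auto simp: bmat_def)
    have E: "seidel_matrix (strong_delete (complete_bip3 m n) v) $$ (i, j) =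
      (if i = j then 0 else 1 - 2 * real (codegree (strong_delete (complete_bip3 m n) v) (fidx v i) (fidx v j)))"
      unfolding seidel_matrix_def Let_def using vs_del[OF v' i] vs_del[OF v' j] i j by simp
    have B: "bmat (m - 1) n (1 - 2 * real n) (1 - 2 * real (m - 1)) (1 - 2 * real (m + n - 3)) $$ (i, j)
      = bent (m - 1) (1 - 2 * real n) (1 - 2 * real (m - 1)) (1 - 2 * real (m + n - 3)) i j"
      unfolding bmat_def using i j N by simp
    have fx: "(fidx v i < m) = (i < m - 1)" "(fidx v j < m) = (j < m - 1)" using v by (auto simp: fidx_def)
    show "seidel_matrix (strong_delete (complete_bip3 m n) v) $$ (i, j) = bmat (m - 1) n (1 - 2 * real n) (1 - 2 * real (m - 1)) (1 - 2 * real (m + n - 3)) $$ (i, j)"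
    proof (cases "i = j")
      case True then show ?thesis unfolding E B by (simp add: bent_def)
    next
      case False
      have cd: "codegree (strong_delete (complete_bip3 m n) v) (fidx v i) (fidx v j) = card (KK m n (fidx v i) (fidx v j) v)"
        by (rule codeg_del) (use fidx_props[OF i v'] fidx_props[OF j v'] fidx_inj[OF False] in auto)
      consider "i < m - 1" "j < m - 1" | "m - 1 \<le> i" "m - 1 \<le> j" | "i < m - 1 \<and> m - 1 \<le> j \<or> j < m - 1 \<and> m - 1 \<le> i" by linarith
      then show ?thesis
      proof cases
        case 1 then show ?thesis unfolding E B cd using False v fx by (simp add: bent_def KK_11)
      next
        case 2 then show ?thesis unfolding E B cd using False v fx by (simp add: bent_def KK_22 of_nat_diff)
      next
        case 3
        have "card (KK m n (fidx v i) (fidx v j) v) = m + n - 3"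
          using KK_12[of "fidx v i" "fidx v j" m n v] 3 fx fidx_props[OF i v'] fidx_props[OF j v'] fidx_inj[OF False] v' by auto
        then show ?thesis unfolding E B cd using 3 False by (auto simp: bent_def)
      qed
    qed
  qed (use v in \<open>auto simp: seidel_matrix_def Let_def bmat_def vs_del[OF v'] N card_hv_del[OF v']\<close>)
qed

lemma SM_del2:
  assumes v: "m \<le> v" "v < m + n"
  shows "seidel_matrix (strong_delete (complete_bip3 m n) v) = bmat m (n - 1) (1 - 2 * real (n - 1)) (1 - 2 * real m) (1 - 2 * real (m + n - 3))"
proof -
  have v': "v < m + n" using v by simp
  have N: "m + (n - 1) = m + n - 1" using v by simp
  show ?thesis
  proof (rule eq_matI)
    fix i j assume "i < dim_row (bmat m (n - 1) (1 - 2 * real (n - 1)) (1 - 2 * real m) (1 - 2 * real (m + n - 3)))"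
      "j < dim_col (bmat m (n - 1) (1 - 2 * real (n - 1)) (1 - 2 * real m) (1 - 2 * real (m + n - 3)))"
    then have i: "i < m + n - 1" and j: "j < m + n - 1" using N by (auto simp: bmat_def)
    have E: "seidel_matrix (strong_delete (complete_bip3 m n) v) $$ (i, j) =
      (if i = j then 0 else 1 - 2 * real (codegree (strong_delete (complete_bip3 m n) v) (fidx v i) (fidx v j)))"
      unfolding seidel_matrix_def Let_def using vs_del[OF v' i] vs_del[OF v' j] i j by simp
    have B: "bmat m (n - 1) (1 - 2 * real (n - 1)) (1 - 2 * real m) (1 - 2 * real (m + n - 3)) $$ (i, j)
      = bent m (1 - 2 * real (n - 1)) (1 - 2 * real m) (1 - 2 * real (m + n - 3)) i j"
      unfolding bmat_def using i j N by simp
    have fx: "(fidx v i < m) = (i < m)" "(fidx v j < m) = (j < m)" using v by (auto simp: fidx_def)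
    show "seidel_matrix (strong_delete (complete_bip3 m n) v) $$ (i, j) = bmat m (n - 1) (1 - 2 * real (n - 1)) (1 - 2 * real m) (1 - 2 * real (m + n - 3)) $$ (i, j)"
    proof (cases "i = j")
      case True then show ?thesis unfolding E B by (simp add: bent_def)
    next
      case False
      have cd: "codegree (strong_delete (complete_bip3 m n) v) (fidx v i) (fidx v j) = card (KK m n (fidx v i) (fidx v j) v)"
        by (rule codeg_del) (use fidx_props[OF i v'] fidx_props[OF j v'] fidx_inj[OF False] in auto)
      consider "i < m" "j < m" | "m \<le> i" "m \<le> j" | "i < m \<and> m \<le> j \<or> j < m \<and> m \<le> i" by linarith
      then show ?thesis
      proof cases
        case 1 then show ?thesis unfolding E B cd using False v fx by (simp add: bent_def KK_11)
      next
        case 2 then show ?thesis unfolding E B cd using False v fx by (simp add: bent_def KK_22)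
      next
        case 3
        have "card (KK m n (fidx v i) (fidx v j) v) = m + n - 3"
          using KK_12[of "fidx v i" "fidx v j" m n v] 3 fx fidx_props[OF i v'] fidx_props[OF j v'] fidx_inj[OF False] v' by auto
        then show ?thesis unfolding E B cd using 3 False by (auto simp: bent_def)
      qed
    qed
  qed (use v in \<open>auto simp: seidel_matrix_def Let_def bmat_def vs_del[OF v'] N card_hv_del[OF v']\<close>)
qed



definition Dq :: "real \<Rightarrow> real \<Rightarrow> real" where
  "Dq x y = ((x - 1) * (1 - 2 * y) - (y - 1) * (1 - 2 * x))^2 + 4 * ((5 - 2 * x - 2 * y) * (5 - 2 * x - 2 * y) * x * y)"

definition En :: "real \<Rightarrow> real \<Rightarrow> real" where
  "En x y = (x - 1) * \<bar>1 - 2 * y\<bar> + (y - 1) * \<bar>1 - 2 * x\<bar> + sqrt (Dq x y)"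

lemma neg_ok:
  fixes p q :: nat assumes "p \<ge> 2" "q \<ge> 2"
  shows "((real p - 1) * (1 - 2 * real q)) * ((real q - 1) * (1 - 2 * real p)) <
    (5 - 2 * real p - 2 * real q) * (5 - 2 * real p - 2 * real q) * real p * real q"
proof -
  obtain s t where st: "p = s + 2" "q = t + 2" using assms by (metis le_add_diff_inverse2)
  define x where "x = real s" define y where "y = real t"
  have "(5 - 2 * real p - 2 * real q) * (5 - 2 * real p - 2 * real q) * real p * real q -
        ((real p - 1) * (1 - 2 * real q)) * ((real q - 1) * (1 - 2 * real p)) =
     27 + 51*y + 34*y^2 + 8*y^3 + 51*x + 64*x*y + 26*x*y^2 + 4*x*y^3 + 34*x^2 + 26*x^2*y + 4*x^2*y^2 + 8*x^3 + 4*x^3*y"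
    unfolding st x_def y_def by (simp add: algebra_simps power2_eq_square power3_eq_cube)
  also have "\<dots> = real (27 + 51*t + 34*t^2 + 8*t^3 + 51*s + 64*s*t + 26*s*t^2 + 4*s*t^3 + 34*s^2 + 26*s^2*t + 4*s^2*t^2 + 8*s^3 + 4*s^3*t)"
    unfolding x_def y_def by simp
  also have "\<dots> > 0" by (rule of_nat_0_less_iff[THEN iffD2]) simp
  finally show ?thesis by simp
qed

lemma D_mono:
  fixes m n :: nat assumes "m \<ge> 3" "n \<ge> 3"
  shows "Dq (real m - 1) (real n) < Dq (real m) (real n)"
proof -
  obtain s t where st: "m = s + 3" "n = t + 3" using assms by (metis le_add_diff_inverse2)
  define x where "x = real s" define y where "y = real t"
  have "Dq (real m) (real n) - Dq (real m - 1) (real n) =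
     1163 + 914*y + 224*y^2 + 16*y^3 + 818*x + 464*x*y + 64*x*y^2 + 144*x^2 + 48*x^2*y"
    unfolding st x_def y_def Dq_def by (simp add: algebra_simps power2_eq_square power3_eq_cube)
  also have "\<dots> = real (1163 + 914*t + 224*t^2 + 16*t^3 + 818*s + 464*s*t + 64*s*t^2 + 144*s^2 + 48*s^2*t)"
    unfolding x_def y_def by simp
  also have "\<dots> > 0" by (rule of_nat_0_less_iff[THEN iffD2]) simp
  finally show ?thesis by simp
qed

lemma Dq_sym: "Dq x y = Dq y x"
  unfolding Dq_def by (simp add: algebra_simps power2_eq_square)

lemma En_sym: "En x y = En y x"
  unfolding En_def Dq_sym[of x y] by simp

lemma En_mono:
  fixes m n :: nat assumes "m \<ge> 3" "n \<ge> 3"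
  shows "En (real m - 1) (real n) < En (real m) (real n)"
proof -
  have s: "sqrt (Dq (real m - 1) (real n)) < sqrt (Dq (real m) (real n))"
    using D_mono[OF assms] real_sqrt_less_iff by blast
  have a1: "\<bar>1 - 2 * real n\<bar> = 2 * real n - 1" using assms by simp
  have a2: "\<bar>1 - 2 * real m\<bar> = 2 * real m - 1" using assms by simp
  have a3: "\<bar>1 - 2 * (real m - 1)\<bar> = 2 * real m - 3" using assms by simp
  have "real n \<ge> 3" using assms by simp
  then show ?thesis unfolding En_def a1 a2 a3 by (simp add: algebra_simps) (use s \<open>real n \<ge> 3\<close> in linarith)
qed



lemma energy_gen:
  fixes p q :: nat assumes p: "p \<ge> 2" and q: "q \<ge> 2"
  shows "(let P = char_poly (bmat p q (1 - 2 * real q) (1 - 2 * real p) (1 - 2 * real (p + q - 2))) in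
          (\<Sum>r \<in> {x. poly P x = 0}. \<bar>r\<bar> * real (order r P))) = En (real p) (real q)"
proof -
  have c: "1 - 2 * real (p + q - 2) = 5 - 2 * real p - 2 * real q" using p q by (simp add: of_nat_diff)
  have cnz: "5 - 2 * real p - 2 * real q \<noteq> 0"
  proof
    assume "5 - 2 * real p - 2 * real q = 0"
    then have "real (2 * p + 2 * q) = real (5::nat)" by simp
    then have "2 * p + 2 * q = 5" by (simp only: of_nat_eq_iff)
    then show False by presburger
  qed
  have "(let P = char_poly (bmat p q (1 - 2 * real q) (1 - 2 * real p) (1 - 2 * real (p + q - 2))) in
          (\<Sum>r \<in> {x. poly P x = 0}. \<bar>r\<bar> * real (order r P))) =
     (real p - 1) * \<bar>1 - 2 * real q\<bar> + (real q - 1) * \<bar>1 - 2 * real p\<bar> +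
     sqrt (((real p - 1) * (1 - 2 * real q) - (real q - 1) * (1 - 2 * real p))^2 +
       4 * ((5 - 2 * real p - 2 * real q) * (5 - 2 * real p - 2 * real q) * real p * real q))"
    unfolding c
    by (rule energy_bmat) (use p q cnz neg_ok[OF p q] in auto)
  also have "\<dots> = En (real p) (real q)" unfolding En_def Dq_def ..
  finally show ?thesis .
qed

theorem corollary3p6:
  fixes m n v :: nat
  assumes "m \<ge> 3" and "n \<ge> 3" and "v \<in> hverts (complete_bip3 m n)"
  shows "seidel_energy (complete_bip3 m n) > seidel_energy (strong_delete (complete_bip3 m n) v)"
proof -
  have v: "v < m + n" using assms(3) by (simp add: hverts_def complete_bip3_def)
  have E0: "seidel_energy (complete_bip3 m n) = En (real m) (real n)"
    unfolding seidel_energy_def SM_complete using energy_gen[of m n] assms by simp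
  show ?thesis
  proof (cases "v < m")
    case True
    have e: "m + n - 3 = (m - 1) + n - 2" using assms by simp
    have "seidel_energy (strong_delete (complete_bip3 m n) v) = En (real (m - 1)) (real n)"
      unfolding seidel_energy_def SM_del1[OF True] e using energy_gen[of "m - 1" n] assms by simp
    also have "\<dots> = En (real m - 1) (real n)" using assms by (simp add: of_nat_diff)
    also have "\<dots> < En (real m) (real n)" by (rule En_mono) (use assms in auto)
    finally show ?thesis unfolding E0 .
  next
    case False
    have e: "m + n - 3 = m + (n - 1) - 2" using assms by simp
    have mv: "m \<le> v" using False by simp
    have "seidel_energy (strong_delete (complete_bip3 m n) v) = En (real m) (real (n - 1))"
      unfolding seidel_energy_def SM_del2[OF mv v] e using False energy_gen[of m "n - 1"] assms by simp
    also have "\<dots> = En (real n - 1) (real m)" using assms by (simp add: of_nat_diff En_sym)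
    also have "\<dots> < En (real n) (real m)" by (rule En_mono) (use assms in auto)
    also have "\<dots> = En (real m) (real n)" by (rule En_sym)
    finally show ?thesis unfolding E0 .
  qed
qed


end
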